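(* Let $D=(V,A)$ be a digraph with minimum in-degree at least 1, and let $\mathcal{L}D=\mathcal{L}_{(A',\phi)}D$ be a partial line digraph of $D$. Then the Fibonacci number of $D$ is less than or equal to the Fibonacci number of $\mathcal{L}D$.
   Context: Digraphs are loopless and without multiple arcs. For a vertex $j$, $\omega^-(j)$ is the set of arcs with terminal vertex $j$; for a set of arcs $\Omega$, $H(\Omega)=\{y:(x,y)\in\Omega\}$. The arc $(x,y)$ is also written $xy$. Partial line digraph: given $D=(V,A)$ with minimum in-degree at least 1, take an arc subset $A'\subseteq A$ and a surjective map $\phi:A\to A'$ such that (i) $H(A')=V$; (ii) $\phi$ restricted to $A'$ is the identity, and for every vertex $j\in V$, $\phi(\omega^-(j))\subseteq\omega^-(j)\cap A'$. The partial line digraph $\mathcal{L}_{(A',\phi)}D$ has vertex set $A'$ and arc set $\{(ij,\phi(j,k)) : ij\in A',\ (j,k)\in A\}$. A set of vertices is independent if no arc joins two of its vertices (equivalently $d(u,v)\ge 2$ for all distinct $u,v$ in it, where $d$ is directed distance). The Fibonacci number of a digraph is the number of its independent vertex sets, including the empty set. *)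

theory Defs
  imports Main
begin

definition digraph :: "'a set \<Rightarrow> ('a \<times> 'a) set \<Rightarrow> bool" where
  "digraph V A \<longleftrightarrow> finite V \<and> A \<subseteq> V \<times> V \<and> (\<forall>x. (x, x) \<notin> A)"

definition min_indeg_ge1 :: "'a set \<Rightarrow> ('a \<times> 'a) set \<Rightarrow> bool" where
  "min_indeg_ge1 V A \<longleftrightarrow> (\<forall>j\<in>V. \<exists>i. (i, j) \<in> A)"

definition in_arcs :: "('a \<times> 'a) set \<Rightarrow> 'a \<Rightarrow> ('a \<times> 'a) set" where
  "in_arcs A j = {a \<in> A. snd a = j}"

definition heads :: "('a \<times> 'a) set \<Rightarrow> 'a set" where
  "heads \<Omega> = {y. \<exists>x. (x, y) \<in> \<Omega>}"

definition pld_data :: "'a set \<Rightarrow> ('a \<times> 'a) set \<Rightarrow> ('a \<times> 'a) set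
    \<Rightarrow> ('a \<times> 'a \<Rightarrow> 'a \<times> 'a) \<Rightarrow> bool" where
  "pld_data V A A' \<phi> \<longleftrightarrow>
     A' \<subseteq> A \<and> \<phi> ` A = A' \<and> heads A' = V \<and>
     (\<forall>a\<in>A'. \<phi> a = a) \<and>
     (\<forall>j\<in>V. \<phi> ` in_arcs A j \<subseteq> in_arcs A j \<inter> A')"

text \<open>Arc set of the partial line digraph (vertex set is A').\<close>
definition pld_arcs :: "('a \<times> 'a) set \<Rightarrow> ('a \<times> 'a) set \<Rightarrow> ('a \<times> 'a \<Rightarrow> 'a \<times> 'a)
    \<Rightarrow> (('a \<times> 'a) \<times> ('a \<times> 'a)) set" where
  "pld_arcs A A' \<phi> = {((i, j), \<phi> (j', k)) | i j j' k. (i, j) \<in> A' \<and> (j', k) \<in> A \<and> j' = j}"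

definition independent :: "('b \<times> 'b) set \<Rightarrow> 'b set \<Rightarrow> bool" where
  "independent E S \<longleftrightarrow> (\<forall>u\<in>S. \<forall>v\<in>S. (u, v) \<notin> E)"

definition fibonacci_number :: "'b set \<Rightarrow> ('b \<times> 'b) set \<Rightarrow> nat" where
  "fibonacci_number W E = card {S. S \<subseteq> W \<and> independent E S}"

end

theory Submission
  imports Defs
begin

theorem corollary2p2:
  fixes V :: "'a set" and A A' :: "('a \<times> 'a) set" and \<phi> :: "'a \<times> 'a \<Rightarrow> 'a \<times> 'a"
  assumes "digraph V A"
    and "min_indeg_ge1 V A"
    and "pld_data V A A' \<phi>"
  shows "fibonacci_number V A \<le> fibonacci_number A' (pld_arcs A A' \<phi>)"
proof -
  have fin: "finite V" and AV: "A \<subseteq> V \<times> V" using assms(1) by (auto simp: digraph_def)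
  have A'A: "A' \<subseteq> A" and hd: "heads A' = V"
    and ph: "\<forall>j\<in>V. \<phi> ` in_arcs A j \<subseteq> in_arcs A j \<inter> A'"
    using assms(3) by (auto simp: pld_data_def)
  have finA': "finite A'"
    using A'A AV fin by (metis finite_SigmaI finite_subset)
  define f where "f S = {a \<in> A'. snd a \<in> S}" for S
  have inj: "inj_on f {S. S \<subseteq> V \<and> independent A S}"
  proof (rule inj_onI)
    fix S T assume S: "S \<in> {S. S \<subseteq> V \<and> independent A S}" and T: "T \<in> {S. S \<subseteq> V \<and> independent A S}"
      and eq: "f S = f T"
    have "x \<in> T" if "x \<in> S" "S \<subseteq> V" "f S = f T" for x S T
    proof -
      from that hd obtain y where "(y, x) \<in> A'" unfolding heads_def by blast
      then have "(y,x) \<in> f S" using that(1) by (simp add: f_def)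
      then have "(y,x) \<in> f T" using that(3) by simp
      then show ?thesis by (simp add: f_def)
    qed
    then show "S = T" using S T eq by blast
  qed
  have maps: "f ` {S. S \<subseteq> V \<and> independent A S} \<subseteq> {S. S \<subseteq> A' \<and> independent (pld_arcs A A' \<phi>) S}"
  proof
    fix X assume "X \<in> f ` {S. S \<subseteq> V \<and> independent A S}"
    then obtain S where S: "S \<subseteq> V" "independent A S" and X: "X = f S" by auto
    have "independent (pld_arcs A A' \<phi>) X"
      unfolding independent_def
    proof (intro ballI notI)
      fix u v assume u: "u \<in> X" and v: "v \<in> X" and uv: "(u, v) \<in> pld_arcs A A' \<phi>"
      then obtain i j k where u': "u = (i,j)" and vv: "v = \<phi> (j,k)" and jk: "(j,k) \<in> A"
        unfolding pld_arcs_def by auto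
      have kV: "k \<in> V" using jk AV by auto
      have "(j,k) \<in> in_arcs A k" using jk by (simp add: in_arcs_def)
      then have "\<phi> (j,k) \<in> in_arcs A k" using ph kV by blast
      then have "snd v = k" using vv by (auto simp: in_arcs_def)
      then have "k \<in> S" using v X by (auto simp: f_def)
      moreover have "j \<in> S" using u u' X by (auto simp: f_def)
      ultimately show False using S(2) jk by (auto simp: independent_def)
    qed
    then show "X \<in> {S. S \<subseteq> A' \<and> independent (pld_arcs A A' \<phi>) S}"
      using X by (auto simp: f_def)
  qed
  have "finite {S. S \<subseteq> A' \<and> independent (pld_arcs A A' \<phi>) S}"
    using finA' by (rule finite_subset[rotated, OF finite_Pow_iff[THEN iffD2]]) auto
  then show ?thesis unfolding fibonacci_number_def
    using card_inj_on_le[OF inj maps] by blast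
qed

end
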